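(* Let $v\in[2,m-1]$, let $\hat{\mathcal{T}}$ be a triangulation of $C([m]_{v+},n)$ and let $\mathcal{T}=\hat{\mathcal{T}}[x\to v\leftarrow y]$. Then $\operatorname{simp}(\mathcal{T})=\{A\in\nu_{m,\lfloor n/2\rfloor}: A=\hat A[x\to v\leftarrow y]\text{ for some }\hat A\in\operatorname{simp}(\hat{\mathcal{T}})\}$.
   Context: $C(V,n)$ is the cyclic polytope on a finite ordered set $V$ (convex hull of $(t_v,\dots,t_v^n)$, $t_v$ increasing); $C(m,n)=C([m],n)$; a triangulation is a set of $(n+1)$-subsets whose geometric simplices form a simplicial complex covering $C(V,n)$, with simplices including all faces of members. For a triangulation $\mathcal{T}$ of $C(V,n)$, $\operatorname{simp}(\mathcal{T})$ is the set of $(\lfloor n/2\rfloor+1)$-subsets that are faces of simplices of $\mathcal{T}$ and are not contained in any facet of $C(V,n)$. $\nu_{m,d}$ is the set of $(d+1)$-subsets $B=(b_0<\dots<b_d)$ of $[m]$ with $b_{i+1}\geq b_i+2$ for all $i$ and $b_d\leqslant b_0+m-2$. $[m]_{v+}=\{1,\dots,v-1,x,y,v+1,\dots,m\}$ ordered with $v-1<x<y<v+1$. For $S\subseteq[m]_{v+}$, $S[x\to v\leftarrow y]=S$ if $S\cap\{x,y\}=\emptyset$ and $(S\setminus\{x,y\})\cup\{v\}$ otherwise; $\hat{\mathcal{T}}[x\to v\leftarrow y]=\{S[x\to v\leftarrow y]:S\in\hat{\mathcal{T}}\}\cap\binom{[m]}{n+1}$, a triangulation of $C(m,n)$. *)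

theory Defs
  imports "HOL-Analysis.Analysis"
begin

text \<open>Ambient space R^n is real^'n with n = CARD('n). The moment curve
  t |-> (t, t^2, ..., t^n) is realised up to a fixed permutation of coordinates,
  via a fixed bijection from the index type onto {1..n}.\<close>

definition coord_idx :: "'n::finite \<Rightarrow> nat" where
  "coord_idx = (SOME f. bij_betw f (UNIV::'n set) {1..CARD('n)})"

definition moment_pt :: "real \<Rightarrow> real ^ 'n::finite" where
  "moment_pt t = (\<chi> i. t ^ coord_idx i)"

text \<open>Vertex sets are finite sets of reals; the parameter of vertex v is v itself.\<close>

definition cyclic_polytope :: "'n::finite itself \<Rightarrow> real set \<Rightarrow> (real ^ 'n) set" where
  "cyclic_polytope _ V = convex hull (moment_pt ` V)"

definition gsimplex :: "'n::finite itself \<Rightarrow> real set \<Rightarrow> (real ^ 'n) set" where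
  "gsimplex _ S = convex hull (moment_pt ` S)"

definition is_triangulation :: "'n::finite itself \<Rightarrow> real set \<Rightarrow> real set set \<Rightarrow> bool" where
  "is_triangulation N V T \<longleftrightarrow>
     finite V \<and>
     (\<forall>S\<in>T. S \<subseteq> V \<and> card S = CARD('n) + 1) \<and>
     (\<Union>S\<in>T. gsimplex N S) = cyclic_polytope N V \<and>
     (\<forall>S\<in>T. \<forall>S'\<in>T. gsimplex N S \<inter> gsimplex N S' = gsimplex N (S \<inter> S'))"

definition simp_set :: "'n::finite itself \<Rightarrow> real set \<Rightarrow> real set set \<Rightarrow> real set set" where
  "simp_set N V T = {A. card A = CARD('n) div 2 + 1 \<and> (\<exists>S\<in>T. A \<subseteq> S) \<and>
      \<not> (\<exists>F. F facet_of cyclic_polytope N V \<and> (moment_pt ` A :: (real^'n) set) \<subseteq> F)}"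

definition nu :: "nat \<Rightarrow> nat \<Rightarrow> nat set set" where
  "nu m d = {B. B \<subseteq> {1..m} \<and> card B = d + 1 \<and>
      (\<forall>a\<in>B. \<forall>b\<in>B. a < b \<longrightarrow> a + 2 \<le> b) \<and>
      (\<forall>a\<in>B. \<forall>b\<in>B. b \<le> a + m - 2)}"

definition cyc_m :: "nat \<Rightarrow> real set" where
  "cyc_m m = real ` {1..m}"

text \<open>[m]_{v+}: replace v by two points x < y with v-1 < x < y < v+1.\<close>
definition cyc_m_plus :: "nat \<Rightarrow> nat \<Rightarrow> real \<Rightarrow> real \<Rightarrow> real set" where
  "cyc_m_plus m v x y = real ` ({1..m} - {v}) \<union> {x, y}"

definition collapse :: "real \<Rightarrow> real \<Rightarrow> nat \<Rightarrow> real set \<Rightarrow> real set" where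
  "collapse x y v S = (if S \<inter> {x, y} = {} then S else (S - {x, y}) \<union> {real v})"

definition collapse_tri :: "real \<Rightarrow> real \<Rightarrow> nat \<Rightarrow> nat \<Rightarrow> nat \<Rightarrow> real set set \<Rightarrow> real set set" where
  "collapse_tri x y v m n T = collapse x y v ` T \<inter> {S. S \<subseteq> real ` {1..m} \<and> card S = n + 1}"

end

theory Submission
  imports Defs "HOL-Computational_Algebra.Polynomial"
begin
lemma bij_coord: "bij_betw (coord_idx :: 'n::finite \<Rightarrow> nat) UNIV {1..CARD('n)}"
proof -
  have "\<exists>f. bij_betw f (UNIV::'n set) {1..CARD('n)}"
    by (rule finite_same_card_bij) auto
  then show ?thesis unfolding coord_idx_def by (rule someI_ex)
qed

definition vf :: "real poly \<Rightarrow> real ^ 'n::finite" where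
  "vf f = (\<chi> i. coeff f (coord_idx i))"

lemma poly_sum_n:
  fixes f :: "real poly"
  assumes "degree f \<le> n"
  shows "poly f t = (\<Sum>j\<le>n. coeff f j * t ^ j)"
proof -
  have "poly f t = (\<Sum>j\<le>degree f. coeff f j * t ^ j)" by (rule poly_altdef)
  also have "\<dots> = (\<Sum>j\<le>n. coeff f j * t ^ j)"
    by (rule sum.mono_neutral_left) (use assms in \<open>auto simp: coeff_eq_0\<close>)
  finally show ?thesis .
qed

lemma vf_moment:
  fixes f :: "real poly"
  assumes "degree f \<le> CARD('n::finite)"
  shows "poly f t = coeff f 0 + (vf f :: real^'n) \<bullet> moment_pt t"
proof -
  have "(vf f :: real^'n) \<bullet> moment_pt t = (\<Sum>i\<in>UNIV. coeff f (coord_idx i) * t ^ (coord_idx (i::'n)))"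
    by (simp add: inner_vec_def vf_def moment_pt_def)
  also have "\<dots> = (\<Sum>j\<in>{1..CARD('n)}. coeff f j * t ^ j)"
    using sum.reindex_bij_betw[OF bij_coord, of "\<lambda>j. coeff f j * t ^ j"] by simp
  finally have 1: "(vf f :: real^'n) \<bullet> moment_pt t = (\<Sum>j\<in>{1..CARD('n)}. coeff f j * t ^ j)" .
  have "{..CARD('n)} = insert 0 {1..CARD('n)}" by auto
  then have "(\<Sum>j\<le>CARD('n). coeff f j * t ^ j) = coeff f 0 + (\<Sum>j\<in>{1..CARD('n)}. coeff f j * t ^ j)"
    by simp
  then show ?thesis using poly_sum_n[OF assms] 1 by simp
qed

definition hpoly :: "real ^ 'n::finite \<Rightarrow> real \<Rightarrow> real poly" where
  "hpoly a b = [:b:] - (\<Sum>i\<in>UNIV. monom (a $ i) (coord_idx i))"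

lemma hpoly_eval: "poly (hpoly (a::real^'n::finite) b) t = b - a \<bullet> moment_pt t"
  by (simp add: hpoly_def poly_sum poly_monom inner_vec_def moment_pt_def mult.commute)

lemma hpoly_degree: "degree (hpoly (a::real^'n::finite) b) \<le> CARD('n)"
proof -
  have "degree (\<Sum>i\<in>UNIV. monom (a $ i) (coord_idx i)) \<le> CARD('n)"
  proof (rule degree_sum_le)
    fix i :: 'n
    have "coord_idx i \<in> {1..CARD('n)}" using bij_coord bij_betwE by blast
    then show "degree (monom (a $ i) (coord_idx i)) \<le> CARD('n)"
      using degree_monom_le[of "a $ i" "coord_idx i"] by auto
  qed auto
  then show ?thesis unfolding hpoly_def
    using degree_diff_le[of "[:b:]" "CARD('n)"] by auto
qed

lemma hpoly_coeff:
  fixes a :: "real^'n::finite"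
  shows "coeff (hpoly a b) (coord_idx i) = - a $ i"
proof -
  have inj: "inj (coord_idx :: 'n \<Rightarrow> nat)" using bij_coord bij_betw_def by blast
  have pos: "coord_idx i \<ge> 1" using bij_coord bij_betwE by fastforce
  have "(\<Sum>j\<in>UNIV. coeff (monom (a $ j) (coord_idx j)) (coord_idx i)) = (\<Sum>j\<in>UNIV. if j = i then a $ j else 0)"
    by (rule sum.cong) (auto simp: coeff_monom dest: injD[OF inj])
  also have "\<dots> = a $ i" by simp
  moreover have "coeff [:b:] (coord_idx i) = 0" using pos by (cases "coord_idx i") auto
  ultimately show ?thesis by (simp add: hpoly_def coeff_sum)
qed

lemma hpoly_degree_pos:
  fixes a :: "real^'n::finite"
  assumes "a \<noteq> 0"
  shows "1 \<le> degree (hpoly a b)"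
proof -
  obtain i where "a $ i \<noteq> 0" using assms by (metis vec_eq_iff zero_index)
  then have "coeff (hpoly a b) (coord_idx i) \<noteq> 0" by (simp add: hpoly_coeff)
  then have "coord_idx i \<le> degree (hpoly a b)" by (rule le_degree)
  moreover have "coord_idx i \<ge> 1" using bij_coord bij_betwE by fastforce
  ultimately show ?thesis by simp
qed

definition polycov :: "nat \<Rightarrow> real set \<Rightarrow> real set \<Rightarrow> bool" where
  "polycov n V A \<longleftrightarrow> (\<exists>q::real poly. 1 \<le> degree q \<and> degree q \<le> n \<and>
      (\<forall>t\<in>V. 0 \<le> poly q t) \<and> (\<forall>t\<in>A. poly q t = 0))"

lemma facet_iff:
  assumes fin: "finite V" and card: "CARD('n::finite) + 1 \<le> card V" and AV: "A \<subseteq> V" and ne: "A \<noteq> {}"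
  shows "(\<exists>F. F facet_of cyclic_polytope TYPE('n) V \<and> (moment_pt ` A :: (real^'n) set) \<subseteq> F)
         \<longleftrightarrow> polycov CARD('n) V A"
proof
  let ?P = "cyclic_polytope TYPE('n) V"
  have poly: "polyhedron ?P" unfolding cyclic_polytope_def using fin by (simp add: polyhedron_convex_hull)
  assume "\<exists>F. F facet_of ?P \<and> (moment_pt ` A :: (real^'n) set) \<subseteq> F"
  then obtain F where F: "F facet_of ?P" "(moment_pt ` A :: (real^'n) set) \<subseteq> F" by blast
  obtain a b where ab: "a \<noteq> 0" "?P \<subseteq> {x. a \<bullet> x \<le> b}" "F = ?P \<inter> {x. a \<bullet> x = b}"
    using facet_of_polyhedron[OF poly F(1)] by blast
  have mV: "(moment_pt t :: real^'n) \<in> ?P" if "t \<in> V" for t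
    unfolding cyclic_polytope_def using that by (simp add: hull_inc)
  show "polycov CARD('n) V A" unfolding polycov_def
  proof (intro exI[of _ "hpoly a b"] conjI ballI)
    show "1 \<le> degree (hpoly a b)" using hpoly_degree_pos[OF ab(1)] .
    show "degree (hpoly a b) \<le> CARD('n)" by (rule hpoly_degree)
    fix t assume "t \<in> V" then show "0 \<le> poly (hpoly a b) t"
      using mV ab(2) by (auto simp: hpoly_eval)
  next
    fix t assume "t \<in> A" then show "poly (hpoly a b) t = 0"
      using F(2) ab(3) by (auto simp: hpoly_eval)
  qed
next
  let ?P = "cyclic_polytope TYPE('n) V"
  have poly: "polyhedron ?P" unfolding cyclic_polytope_def using fin by (simp add: polyhedron_convex_hull)
  assume "polycov CARD('n) V A"
  then obtain q where q: "1 \<le> degree q" "degree q \<le> CARD('n)" "\<forall>t\<in>V. 0 \<le> poly q t" "\<forall>t\<in>A. poly q t = 0"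
    unfolding polycov_def by blast
  define a :: "real^'n" where "a = - vf q"
  define b where "b = coeff q 0"
  have ev: "a \<bullet> moment_pt t = b - poly q t" for t
    using vf_moment[OF q(2), of t] by (simp add: a_def b_def)
  have sub: "?P \<subseteq> {x. a \<bullet> x \<le> b}"
    unfolding cyclic_polytope_def
    by (rule hull_minimal) (use q(3) ev convex_halfspace_le in auto)
  define F0 where "F0 = ?P \<inter> {x. a \<bullet> x = b}"
  have face: "F0 face_of ?P" unfolding F0_def
    by (rule face_of_Int_supporting_hyperplane_le) (use sub in \<open>auto simp: cyclic_polytope_def\<close>)
  have mV: "(moment_pt t :: real^'n) \<in> ?P" if "t \<in> V" for t
    unfolding cyclic_polytope_def using that by (simp add: hull_inc)
  have AF: "(moment_pt ` A :: (real^'n) set) \<subseteq> F0"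
    using AV mV q(4) ev by (auto simp: F0_def)
  have "F0 \<noteq> {}" using AF ne by auto
  moreover have "F0 \<noteq> ?P"
  proof
    assume "F0 = ?P"
    then have z: "poly q t = 0" if "t \<in> V" for t
    proof -
      have "moment_pt t \<in> F0" using mV[OF that] \<open>F0 = ?P\<close> by simp
      then show ?thesis using ev[of t] by (simp add: F0_def)
    qed
    have "q \<noteq> 0" using q(1) by auto
    then have "card {x. poly q x = 0} \<le> degree q" by (rule card_poly_roots_bound)
    moreover have "card V \<le> card {x. poly q x = 0}"
      by (rule card_mono) (use poly_roots_finite \<open>q \<noteq> 0\<close> z in auto)
    ultimately show False using q(2) card by linarith
  qed
  ultimately obtain F where "F facet_of ?P" "F0 \<subseteq> F"
    using face_of_polyhedron_subset_facet[OF poly face] by blast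
  then show "\<exists>F. F facet_of ?P \<and> (moment_pt ` A :: (real^'n) set) \<subseteq> F" using AF by blast
qed

lemma lagrange_dd:
  fixes T :: "real set" and q :: "real poly"
  assumes fin: "finite T" and deg: "degree q + 2 \<le> card T"
  shows "(\<Sum>t\<in>T. poly q t / (\<Prod>s\<in>T-{t}. (t - s))) = 0"
proof -
  define N where "N = card T"
  define L where "L t = (\<Prod>s\<in>T-{t}. [:-s, 1:])" for t
  define c where "c t = poly q t / (\<Prod>s\<in>T-{t}. (t - s))" for t
  define P where "P = (\<Sum>t\<in>T. smult (c t) (L t))"
  have polyL: "poly (L t) u = (\<Prod>s\<in>T-{t}. (u - s))" for t u
    by (simp add: L_def poly_prod)
  have degL: "degree (L t) = N - 1" if "t \<in> T" for t
  proof -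
    have "degree (L t) = (\<Sum>s\<in>T-{t}. degree [:-s, 1::real:])"
      unfolding L_def by (rule degree_prod_eq_sum_degree) auto
    also have "\<dots> = card (T - {t})" by simp
    also have "\<dots> = N - 1" using that fin by (simp add: N_def)
    finally show ?thesis .
  qed
  have lcL: "coeff (L t) (N - 1) = 1" if "t \<in> T" for t
  proof -
    have "coeff (L t) (N - 1) = lead_coeff (L t)" using degL[OF that] by simp
    also have "\<dots> = 1" unfolding L_def by (simp add: lead_coeff_prod)
    finally show ?thesis .
  qed
  have prodnz: "(\<Prod>s\<in>T-{t}. (t - s)) \<noteq> (0::real)" for t
    using fin by (simp add: prod_zero_iff)
  have polyP: "poly P u = poly q u" if u: "u \<in> T" for u
  proof -
    have "poly P u = (\<Sum>t\<in>T. c t * poly (L t) u)" by (simp add: P_def poly_sum)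
    also have "\<dots> = c u * poly (L u) u + (\<Sum>t\<in>T-{u}. c t * poly (L t) u)"
      using fin u by (simp add: sum.remove)
    also have "(\<Sum>t\<in>T-{u}. c t * poly (L t) u) = 0"
      by (rule sum.neutral) (use fin u in \<open>auto simp: polyL prod_zero_iff\<close>)
    also have "c u * poly (L u) u = poly q u" using prodnz[of u] by (simp add: c_def polyL)
    finally show ?thesis by simp
  qed
  have N2: "N \<ge> 2" using deg by (simp add: N_def)
  have degP: "degree P \<le> N - 1" unfolding P_def
    by (rule degree_sum_le) (use fin in \<open>auto intro: order.trans[OF degree_smult_le] simp: degL\<close>)
  have "P = q"
    by (rule poly_eqI_degree[of T]) (use polyP degP N2 deg in \<open>auto simp: N_def\<close>)
  then have "coeff P (N - 1) = coeff q (N - 1)" by simp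
  also have "coeff q (N - 1) = 0" using deg by (intro coeff_eq_0) (simp add: N_def)
  finally have "coeff P (N - 1) = 0" .
  moreover have "coeff P (N - 1) = (\<Sum>t\<in>T. c t)"
    unfolding P_def coeff_sum coeff_smult by (rule sum.cong) (use lcL in auto)
  ultimately show ?thesis by (simp add: c_def)
qed

lemma gale_core:
  fixes T W :: "real set" and q :: "real poly"
  assumes fin: "finite T" and WT: "W \<subseteq> T" and deg: "degree q + 2 \<le> card T"
    and z: "\<forall>t\<in>T-W. poly q t = 0" and nn: "\<forall>w\<in>W. 0 \<le> poly q w"
    and sg: "(\<forall>w\<in>W. 0 < (\<Prod>s\<in>T-{w}. (w - s))) \<or> (\<forall>w\<in>W. (\<Prod>s\<in>T-{w}. (w - s)) < 0)"
  shows "q = 0"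
proof -
  define c where "c t = poly q t / (\<Prod>s\<in>T-{t}. (t - s))" for t
  have "(\<Sum>t\<in>T. c t) = 0" using lagrange_dd[OF fin deg] by (simp add: c_def)
  moreover have "(\<Sum>t\<in>T. c t) = (\<Sum>t\<in>W. c t)"
    by (rule sum.mono_neutral_right) (use fin WT z in \<open>auto simp: c_def\<close>)
  ultimately have s0: "(\<Sum>t\<in>W. c t) = 0" by simp
  have finW: "finite W" using fin WT finite_subset by blast
  have wz: "poly q w = 0" if "w \<in> W" for w
  proof -
    from sg show ?thesis
    proof
      assume pos: "\<forall>w\<in>W. 0 < (\<Prod>s\<in>T-{w}. (w - s))"
      have "\<forall>w\<in>W. 0 \<le> c w" using pos nn by (auto simp: c_def)
      then have "\<forall>w\<in>W. c w = 0" using sum_nonneg_eq_0_iff[OF finW] s0 by blast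
      then have "c w = 0" using that by blast
      moreover have "(\<Prod>s\<in>T-{w}. (w - s)) \<noteq> 0" using pos that by force
      ultimately show ?thesis by (simp add: c_def)
    next
      assume neg: "\<forall>w\<in>W. (\<Prod>s\<in>T-{w}. (w - s)) < 0"
      have "\<forall>w\<in>W. 0 \<le> - c w" using neg nn by (auto simp: c_def divide_nonneg_neg)
      moreover have "(\<Sum>t\<in>W. - c t) = 0" using s0 by (simp add: sum_negf)
      ultimately have "\<forall>w\<in>W. - c w = 0" using sum_nonneg_eq_0_iff[OF finW, of "\<lambda>t. - c t"] by simp
      then have "c w = 0" using that by simp
      moreover have "(\<Prod>s\<in>T-{w}. (w - s)) \<noteq> 0" using neg that by force
      ultimately show ?thesis by (simp add: c_def)
    qed
  qed
  have "\<forall>t\<in>T. poly q t = 0" using z wz by blast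
  then show "q = 0"
    by (intro poly_eqI_degree[of T q 0]) (use deg in auto)
qed

lemma cover_construct:
  fixes V A B :: "real set" and r :: "real poly"
  assumes finA: "finite A" and BA: "B \<subseteq> A" and r1: "1 \<le> degree r"
    and rV: "\<forall>t\<in>V. 0 \<le> poly r t" and rB: "\<forall>t\<in>B. poly r t = 0"
    and dg: "2 * card (A - B) + degree r \<le> n"
  shows "polycov n V A"
proof -
  define Q where "Q = (\<Prod>a\<in>A-B. [:-a, 1:] ^ 2)"
  have Qnz: "Q \<noteq> 0" unfolding Q_def using finA by (simp add: prod_zero_iff)
  have rnz: "r \<noteq> 0" using r1 by auto
  have dQ: "degree Q \<le> 2 * card (A - B)"
  proof -
    have "degree Q \<le> sum (degree \<circ> (\<lambda>a. [:-a, 1:] ^ 2)) (A - B)"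
      unfolding Q_def using finA by (intro degree_prod_sum_le) auto
    also have "\<dots> = 2 * card (A - B)" by (simp add: degree_linear_power)
    finally show ?thesis .
  qed
  have dq: "degree (Q * r) = degree Q + degree r" using Qnz rnz by (rule degree_mult_eq)
  show ?thesis unfolding polycov_def
  proof (intro exI[of _ "Q * r"] conjI ballI)
    show "1 \<le> degree (Q * r)" using dq r1 by simp
    show "degree (Q * r) \<le> n" using dq dQ dg by simp
  next
    fix t assume "t \<in> V"
    have "0 \<le> poly Q t" unfolding Q_def by (simp add: poly_prod prod_nonneg)
    then show "0 \<le> poly (Q * r) t" using rV \<open>t \<in> V\<close> by simp
  next
    fix t assume t: "t \<in> A"
    show "poly (Q * r) t = 0"
    proof (cases "t \<in> B")
      case True then show ?thesis using rB by simp
    next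
      case False
      then have "poly Q t = 0" unfolding Q_def using finA t
        by (auto simp: poly_prod prod_zero_iff)
      then show ?thesis by simp
    qed
  qed
qed

definition sep :: "real set \<Rightarrow> real set \<Rightarrow> bool" where
  "sep V A \<longleftrightarrow> (\<forall>a\<in>A. \<forall>b\<in>A. a < b \<longrightarrow> (\<exists>s\<in>V. a < s \<and> s < b))"

lemma prodW:
  fixes A E :: "real set" and f :: "real \<Rightarrow> real"
  assumes finA: "finite A" and finE: "finite E" and inj: "inj_on f A" and disj: "f ` A \<inter> A = {}"
    and a0: "a0 \<in> A" and dE: "E \<inter> (A \<union> f ` A) = {}"
  shows "(\<Prod>s\<in>(A \<union> f ` A \<union> E) - {f a0}. (f a0 - s)) =
         (f a0 - a0) * (\<Prod>a\<in>A-{a0}. (f a0 - a) * (f a0 - f a)) * (\<Prod>e\<in>E. (f a0 - e))"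
proof -
  let ?w = "f a0"
  have fa0E: "?w \<notin> E" using dE a0 by auto
  have fa0A: "?w \<notin> A" using disj a0 by auto
  have fa0f: "?w \<notin> f ` (A - {a0})" using inj a0 by (auto simp: inj_on_def)
  have eq: "(A \<union> f ` A \<union> E) - {?w} = (A \<union> f ` (A - {a0})) \<union> E"
    using fa0E fa0A fa0f a0 by auto
  have d1: "(A \<union> f ` (A - {a0})) \<inter> E = {}" using dE by auto
  have d2: "A \<inter> f ` (A - {a0}) = {}" using disj by auto
  have "(\<Prod>s\<in>(A \<union> f ` (A - {a0})) \<union> E. (?w - s)) =
        (\<Prod>s\<in>A \<union> f ` (A - {a0}). (?w - s)) * (\<Prod>e\<in>E. (?w - e))"
    by (rule prod.union_disjoint) (use finA finE d1 in auto)
  also have "(\<Prod>s\<in>A \<union> f ` (A - {a0}). (?w - s)) = (\<Prod>s\<in>A. (?w - s)) * (\<Prod>s\<in>f ` (A - {a0}). (?w - s))"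
    by (rule prod.union_disjoint) (use finA d2 in auto)
  also have "(\<Prod>s\<in>f ` (A - {a0}). (?w - s)) = (\<Prod>a\<in>A - {a0}. (?w - f a))"
    by (subst prod.reindex) (use inj in \<open>auto intro: inj_on_subset\<close>)
  also have "(\<Prod>s\<in>A. (?w - s)) = (?w - a0) * (\<Prod>s\<in>A-{a0}. (?w - s))"
    using finA a0 by (simp add: prod.remove)
  finally show ?thesis using eq by (simp add: prod.distrib mult.assoc)
qed

lemma prodE:
  fixes A :: "real set" and f :: "real \<Rightarrow> real"
  assumes finA: "finite A" and inj: "inj_on f A" and disj: "f ` A \<inter> A = {}"
  shows "(\<Prod>s\<in>A \<union> f ` A. (e - s)) = (\<Prod>a\<in>A. (e - a) * (e - f a))"
proof -
  have "(\<Prod>s\<in>A \<union> f ` A. (e - s)) = (\<Prod>s\<in>A. (e - s)) * (\<Prod>s\<in>f ` A. (e - s))"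
    by (rule prod.union_disjoint) (use finA disj in auto)
  also have "(\<Prod>s\<in>f ` A. (e - s)) = (\<Prod>a\<in>A. (e - f a))"
    by (subst prod.reindex) (use inj in auto)
  finally show ?thesis by (simp add: prod.distrib)
qed

lemma pair_pos:
  fixes a b w :: real
  assumes "w \<in> V" "\<forall>s\<in>V. \<not> (min a b < s \<and> s < max a b)" "w \<noteq> a" "w \<noteq> b"
  shows "0 < (w - a) * (w - b)"
proof -
  have "w < min a b \<or> w > max a b" using assms by force
  then show ?thesis
    by (auto simp: min_def max_def split: if_splits intro: mult_pos_pos mult_neg_neg)
qed

lemma gale_generic:
  fixes V A E :: "real set" and f :: "real \<Rightarrow> real" and q :: "real poly"
  assumes finV: "finite V" and AV: "A \<subseteq> V" and inj: "inj_on f A"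
    and fV: "\<forall>a\<in>A. f a \<in> V \<and> f a \<notin> A"
    and adj: "\<forall>a\<in>A. \<forall>s\<in>V. \<not> (min a (f a) < s \<and> s < max a (f a))"
    and dir: "(\<forall>a\<in>A. a < f a) \<or> (\<forall>a\<in>A. f a < a)"
    and EV: "E \<subseteq> V" and dE: "E \<inter> (A \<union> f ` A) = {}"
    and Ecase: "E = {} \<or> (\<exists>e. E = {e} \<and> (\<forall>s\<in>A \<union> f ` A. e < s) \<and> (\<forall>a\<in>A. a < f a))"
    and dq: "degree q + 2 \<le> 2 * card A + card E"
    and qV: "\<forall>t\<in>V. 0 \<le> poly q t" and qA: "\<forall>t\<in>A. poly q t = 0"
  shows "q = 0"
proof -
  have finA: "finite A" using finV AV finite_subset by blast
  have finE: "finite E" using finV EV finite_subset by blast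
  have disj: "f ` A \<inter> A = {}" using fV by auto
  define T where "T = A \<union> f ` A \<union> E"
  define W where "W = f ` A \<union> E"
  have finT: "finite T" using finA finE by (simp add: T_def)
  have cardT: "card T = 2 * card A + card E"
  proof -
    have "card T = card (A \<union> f ` A) + card E"
      unfolding T_def by (rule card_Un_disjoint) (use finA finE dE in auto)
    also have "card (A \<union> f ` A) = card A + card (f ` A)"
      by (rule card_Un_disjoint) (use finA disj in auto)
    also have "card (f ` A) = card A" using inj by (simp add: card_image)
    finally show ?thesis by simp
  qed
  have pairs: "0 < (\<Prod>a\<in>A-{a0}. (f a0 - a) * (f a0 - f a))" if a0: "a0 \<in> A" for a0
  proof (rule prod_pos)
    fix a assume a: "a \<in> A - {a0}"
    show "0 < (f a0 - a) * (f a0 - f a)"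
    proof (rule pair_pos[of _ V])
      show "f a0 \<in> V" using fV a0 by auto
      show "\<forall>s\<in>V. \<not> (min a (f a) < s \<and> s < max a (f a))" using adj a by auto
      show "f a0 \<noteq> a" using fV a0 a by auto
      show "f a0 \<noteq> f a" using inj a0 a by (auto simp: inj_on_def)
    qed
  qed
  have sgW: "(\<forall>w\<in>W. 0 < (\<Prod>s\<in>T-{w}. (w - s))) \<or> (\<forall>w\<in>W. (\<Prod>s\<in>T-{w}. (w - s)) < 0)"
    using Ecase
  proof
    assume E0: "E = {}"
    have eqW: "(\<Prod>s\<in>T-{f a0}. (f a0 - s)) = (f a0 - a0) * (\<Prod>a\<in>A-{a0}. (f a0 - a) * (f a0 - f a))"
      if "a0 \<in> A" for a0
      using prodW[OF finA finE inj disj that dE] E0 by (simp add: T_def)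
    from dir show ?thesis
    proof
      assume up: "\<forall>a\<in>A. a < f a"
      have "0 < (\<Prod>s\<in>T-{w}. (w - s))" if "w \<in> W" for w
      proof -
        obtain a0 where a0: "a0 \<in> A" "w = f a0" using \<open>w \<in> W\<close> E0 by (auto simp: W_def)
        show ?thesis using eqW[OF a0(1)] pairs[OF a0(1)] up a0 by simp
      qed
      then show ?thesis by blast
    next
      assume dn: "\<forall>a\<in>A. f a < a"
      have "(\<Prod>s\<in>T-{w}. (w - s)) < 0" if "w \<in> W" for w
      proof -
        obtain a0 where a0: "a0 \<in> A" "w = f a0" using \<open>w \<in> W\<close> E0 by (auto simp: W_def)
        have "f a0 - a0 < 0" using dn a0 by auto
        then show ?thesis using eqW[OF a0(1)] pairs[OF a0(1)] a0 by (simp add: mult_neg_pos)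
      qed
      then show ?thesis by blast
    qed
  next
    assume "\<exists>e. E = {e} \<and> (\<forall>s\<in>A \<union> f ` A. e < s) \<and> (\<forall>a\<in>A. a < f a)"
    then obtain e where e: "E = {e}" "\<forall>s\<in>A \<union> f ` A. e < s" "\<forall>a\<in>A. a < f a" by blast
    have "0 < (\<Prod>s\<in>T-{w}. (w - s))" if "w \<in> W" for w
    proof (cases "w = e")
      case True
      have eT: "T - {e} = A \<union> f ` A" using dE e(1) by (auto simp: T_def)
      have "0 < (\<Prod>a\<in>A. (e - a) * (e - f a))"
        by (rule prod_pos) (use e(2) in \<open>auto intro!: mult_neg_neg\<close>)
      then show ?thesis using True eT prodE[OF finA inj disj, of e] by simp
    next
      case False
      obtain a0 where a0: "a0 \<in> A" "w = f a0" using \<open>w \<in> W\<close> False e(1) by (auto simp: W_def)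
      have "(\<Prod>s\<in>T-{w}. (w - s)) = (f a0 - a0) * (\<Prod>a\<in>A-{a0}. (f a0 - a) * (f a0 - f a)) * (f a0 - e)"
        using prodW[OF finA finE inj disj a0(1) dE] e(1) a0(2) by (simp add: T_def)
      moreover have "0 < f a0 - e" using e(2) a0 by auto
      moreover have "0 < f a0 - a0" using e(3) a0 by auto
      ultimately show ?thesis using pairs[OF a0(1)] by simp
    qed
    then show ?thesis by blast
  qed
  show "q = 0"
  proof (rule gale_core[OF finT _ _ _ _ sgW])
    show "W \<subseteq> T" by (auto simp: W_def T_def)
    show "degree q + 2 \<le> card T" using dq cardT by simp
    show "\<forall>t\<in>T - W. poly q t = 0" using qA by (auto simp: T_def W_def)
    show "\<forall>w\<in>W. 0 \<le> poly q w" using qV fV EV by (auto simp: W_def)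
  qed
qed

definition succ_in :: "real set \<Rightarrow> real \<Rightarrow> real" where
  "succ_in V a = Min {s\<in>V. a < s}"
definition pred_in :: "real set \<Rightarrow> real \<Rightarrow> real" where
  "pred_in V a = Max {s\<in>V. s < a}"

lemma succ_in_props:
  assumes "finite V" "a \<in> V" "a \<noteq> Max V"
  shows "succ_in V a \<in> V" "a < succ_in V a" "\<And>s. s \<in> V \<Longrightarrow> a < s \<Longrightarrow> succ_in V a \<le> s"
proof -
  have "a \<le> Max V" using assms by simp
  then have "a < Max V" using assms(3) by simp
  moreover have "Max V \<in> V" using assms by (auto intro: Max_in)
  ultimately have ne: "{s\<in>V. a < s} \<noteq> {}" by blast
  have fin: "finite {s\<in>V. a < s}" using assms by simp
  have "succ_in V a \<in> {s\<in>V. a < s}" unfolding succ_in_def using Min_in[OF fin ne] .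
  then show "succ_in V a \<in> V" "a < succ_in V a" by auto
  fix s assume "s \<in> V" "a < s"
  then show "succ_in V a \<le> s" unfolding succ_in_def using fin by (auto intro: Min_le)
qed

lemma pred_in_props:
  assumes "finite V" "a \<in> V" "a \<noteq> Min V"
  shows "pred_in V a \<in> V" "pred_in V a < a" "\<And>s. s \<in> V \<Longrightarrow> s < a \<Longrightarrow> s \<le> pred_in V a"
proof -
  have "Min V \<le> a" using assms by simp
  then have "Min V < a" using assms(3) by simp
  moreover have "Min V \<in> V" using assms by (auto intro: Min_in)
  ultimately have ne: "{s\<in>V. s < a} \<noteq> {}" by blast
  have fin: "finite {s\<in>V. s < a}" using assms by simp
  have "pred_in V a \<in> {s\<in>V. s < a}" unfolding pred_in_def using Max_in[OF fin ne] .
  then show "pred_in V a \<in> V" "pred_in V a < a" by auto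
  fix s assume "s \<in> V" "s < a"
  then show "s \<le> pred_in V a" unfolding pred_in_def using fin by (auto intro: Max_ge)
qed

lemma succ_facts:
  assumes finV: "finite V" and AV: "A \<subseteq> V" and sp: "sep V A" and mx: "Max V \<notin> A"
  shows "inj_on (succ_in V) A" "\<forall>a\<in>A. succ_in V a \<in> V \<and> succ_in V a \<notin> A"
    "\<forall>a\<in>A. \<forall>s\<in>V. \<not> (min a (succ_in V a) < s \<and> s < max a (succ_in V a))"
    "\<forall>a\<in>A. a < succ_in V a"
proof -
  have P: "succ_in V a \<in> V" "a < succ_in V a" "\<And>s. s \<in> V \<Longrightarrow> a < s \<Longrightarrow> succ_in V a \<le> s"
    if "a \<in> A" for a
  proof -
    have aV: "a \<in> V" "a \<noteq> Max V" using that AV mx by auto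
    show "succ_in V a \<in> V" by (rule succ_in_props(1)[OF finV aV])
    show "a < succ_in V a" by (rule succ_in_props(2)[OF finV aV])
    fix s assume "s \<in> V" "a < s"
    then show "succ_in V a \<le> s" by (rule succ_in_props(3)[OF finV aV])
  qed
  show up: "\<forall>a\<in>A. a < succ_in V a" using P by auto
  show "\<forall>a\<in>A. succ_in V a \<in> V \<and> succ_in V a \<notin> A"
  proof
    fix a assume a: "a \<in> A"
    show "succ_in V a \<in> V \<and> succ_in V a \<notin> A"
    proof
      show "succ_in V a \<in> V" using P a by auto
      show "succ_in V a \<notin> A"
      proof
        assume "succ_in V a \<in> A"
        then obtain s where "s \<in> V" "a < s" "s < succ_in V a"
          using sp a P(2)[OF a] unfolding sep_def by blast
        then show False using P(3)[OF a] by force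
      qed
    qed
  qed
  show "\<forall>a\<in>A. \<forall>s\<in>V. \<not> (min a (succ_in V a) < s \<and> s < max a (succ_in V a))"
    using P by (force simp: min_def max_def)
  show "inj_on (succ_in V) A"
  proof (rule inj_onI)
    fix a b assume ab: "a \<in> A" "b \<in> A" "succ_in V a = succ_in V b"
    show "a = b"
    proof (rule ccontr)
      assume "a \<noteq> b"
      then consider "a < b" | "b < a" by linarith
      then show False
      proof cases
        case 1
        have "succ_in V a \<le> b" using P(3)[OF ab(1)] ab(2) AV 1 by auto
        then show False using P(2)[OF ab(2)] ab(3) by simp
      next
        case 2
        have "succ_in V b \<le> a" using P(3)[OF ab(2)] ab(1) AV 2 by auto
        then show False using P(2)[OF ab(1)] ab(3) by simp
      qed
    qed
  qed
qed

lemma pred_facts: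
  assumes finV: "finite V" and AV: "A \<subseteq> V" and sp: "sep V A" and mn: "Min V \<notin> A"
  shows "inj_on (pred_in V) A" "\<forall>a\<in>A. pred_in V a \<in> V \<and> pred_in V a \<notin> A"
    "\<forall>a\<in>A. \<forall>s\<in>V. \<not> (min a (pred_in V a) < s \<and> s < max a (pred_in V a))"
    "\<forall>a\<in>A. pred_in V a < a"
proof -
  have P: "pred_in V a \<in> V" "pred_in V a < a" "\<And>s. s \<in> V \<Longrightarrow> s < a \<Longrightarrow> s \<le> pred_in V a"
    if "a \<in> A" for a
  proof -
    have aV: "a \<in> V" "a \<noteq> Min V" using that AV mn by auto
    show "pred_in V a \<in> V" by (rule pred_in_props(1)[OF finV aV])
    show "pred_in V a < a" by (rule pred_in_props(2)[OF finV aV])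
    fix s assume "s \<in> V" "s < a"
    then show "s \<le> pred_in V a" by (rule pred_in_props(3)[OF finV aV])
  qed
  show "\<forall>a\<in>A. pred_in V a < a" using P by auto
  show "\<forall>a\<in>A. pred_in V a \<in> V \<and> pred_in V a \<notin> A"
  proof
    fix a assume a: "a \<in> A"
    show "pred_in V a \<in> V \<and> pred_in V a \<notin> A"
    proof
      show "pred_in V a \<in> V" using P a by auto
      show "pred_in V a \<notin> A"
      proof
        assume "pred_in V a \<in> A"
        then obtain s where "s \<in> V" "pred_in V a < s" "s < a"
          using sp a P(2)[OF a] unfolding sep_def by blast
        then show False using P(3)[OF a] by force
      qed
    qed
  qed
  show "\<forall>a\<in>A. \<forall>s\<in>V. \<not> (min a (pred_in V a) < s \<and> s < max a (pred_in V a))"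
    using P by (force simp: min_def max_def)
  show "inj_on (pred_in V) A"
  proof (rule inj_onI)
    fix a b assume ab: "a \<in> A" "b \<in> A" "pred_in V a = pred_in V b"
    show "a = b"
    proof (rule ccontr)
      assume "a \<noteq> b"
      then consider "a < b" | "b < a" by linarith
      then show False
      proof cases
        case 1
        have "a \<le> pred_in V b" using P(3)[OF ab(2)] ab(1) AV 1 by auto
        then show False using P(2)[OF ab(1)] ab(3) by simp
      next
        case 2
        have "b \<le> pred_in V a" using P(3)[OF ab(1)] ab(2) AV 2 by auto
        then show False using P(2)[OF ab(2)] ab(3) by simp
      qed
    qed
  qed
qed

lemma gale:
  fixes V A :: "real set"
  assumes finV: "finite V" and AV: "A \<subseteq> V" and ne: "A \<noteq> {}" and sp: "sep V A"
    and cs: "(n + 2 \<le> 2 * card A \<and> (Max V \<notin> A \<or> Min V \<notin> A)) \<or>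
             (n + 2 \<le> 2 * card A + 1 \<and> Max V \<notin> A \<and> Min V \<notin> A)"
  shows "\<not> polycov n V A"
proof
  assume "polycov n V A"
  then obtain q where q: "1 \<le> degree q" "degree q \<le> n" "\<forall>t\<in>V. 0 \<le> poly q t" "\<forall>t\<in>A. poly q t = 0"
    unfolding polycov_def by blast
  have "q = 0"
    using cs
  proof (elim disjE conjE)
    assume c: "n + 2 \<le> 2 * card A" "Max V \<notin> A"
    note F = succ_facts[OF finV AV sp c(2)]
    show "q = 0"
      by (rule gale_generic[OF finV AV F(1) F(2) F(3) _ _ _ _ _ q(3) q(4), of "{}"])
         (use F(4) c(1) q(2) in auto)
  next
    assume c: "n + 2 \<le> 2 * card A" "Min V \<notin> A"
    note F = pred_facts[OF finV AV sp c(2)]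
    show "q = 0"
      by (rule gale_generic[OF finV AV F(1) F(2) F(3) _ _ _ _ _ q(3) q(4), of "{}"])
         (use F(4) c(1) q(2) in auto)
  next
    assume c: "n + 2 \<le> 2 * card A + 1" "Max V \<notin> A" "Min V \<notin> A"
    note F = succ_facts[OF finV AV sp c(2)]
    have finA: "finite A" using finV AV finite_subset by blast
    have mA: "Min A \<in> A" using finA ne by (rule Min_in)
    have mAle: "Min A \<le> a" if "a \<in> A" for a using finA that by simp
    define e where "e = pred_in V (Min A)"
    have "Min A \<noteq> Min V" using mA c(3) by auto
    note E = pred_in_props[OF finV _ this] 
    have eV: "e \<in> V" and elt: "e < Min A" using E mA AV by (auto simp: e_def)
    show "q = 0"
    proof (rule gale_generic[OF finV AV F(1) F(2) F(3) _ _ _ _ _ q(3) q(4), of "{e}"])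
      show "{e} \<subseteq> V" using eV by simp
      show "{e} \<inter> (A \<union> succ_in V ` A) = {}"
        using elt mAle F(4) by (force)
      show "{e} = {} \<or> (\<exists>ea. {e} = {ea} \<and> (\<forall>s\<in>A \<union> succ_in V ` A. ea < s) \<and> (\<forall>a\<in>A. a < succ_in V a))"
        using elt mAle F(4) by (force intro: less_le_trans less_trans)
      show "degree q + 2 \<le> 2 * card A + card {e}" using c(1) q(2) by simp
    qed (use F(4) in auto)
  qed
  then show False using q(1) by simp
qed

lemma avg_functional:
  fixes f :: "real poly" and Ah :: "real set"
  assumes fin: "finite Ah" and ne: "Ah \<noteq> {}" and dg: "degree f \<le> CARD('n::finite)"
  shows "coeff f 0 + (vf f :: real^'n) \<bullet> ((1 / real (card Ah)) *\<^sub>R (\<Sum>t\<in>Ah. moment_pt t))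
         = (\<Sum>t\<in>Ah. poly f t) / real (card Ah)"
proof -
  have c: "real (card Ah) > 0" using fin ne by (simp add: card_gt_0_iff)
  have "(\<Sum>t\<in>Ah. poly f t) = (\<Sum>t\<in>Ah. coeff f 0 + (vf f :: real^'n) \<bullet> moment_pt t)"
    using vf_moment[OF dg] by simp
  also have "\<dots> = real (card Ah) * coeff f 0 + (vf f :: real^'n) \<bullet> (\<Sum>t\<in>Ah. moment_pt t)"
    by (simp add: sum.distrib inner_sum_right)
  finally show ?thesis using c by (simp add: field_simps)
qed

lemma functional_hull_eq:
  fixes f :: "real poly" and S :: "real set"
  assumes dg: "degree f \<le> CARD('n::finite)" and z: "\<forall>t\<in>S. poly f t = 0"
    and zin: "z \<in> convex hull (moment_pt ` S :: (real^'n) set)"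
  shows "coeff f 0 + (vf f :: real^'n) \<bullet> z = 0"
proof -
  have "convex hull (moment_pt ` S :: (real^'n) set) \<subseteq> {z. (vf f :: real^'n) \<bullet> z = - coeff f 0}"
    by (rule hull_minimal) (use z vf_moment[OF dg] convex_hyperplane in \<open>auto simp: algebra_simps\<close>)
  then show ?thesis using zin by auto
qed

lemma functional_hull_ge:
  fixes f :: "real poly" and S :: "real set"
  assumes dg: "degree f \<le> CARD('n::finite)" and z: "\<forall>t\<in>S. 0 \<le> poly f t"
    and zin: "z \<in> convex hull (moment_pt ` S :: (real^'n) set)"
  shows "0 \<le> coeff f 0 + (vf f :: real^'n) \<bullet> z"
proof -
  have "convex hull (moment_pt ` S :: (real^'n) set) \<subseteq> {z. (vf f :: real^'n) \<bullet> z \<ge> - coeff f 0}"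
    by (rule hull_minimal) (use z vf_moment[OF dg] convex_halfspace_ge in \<open>auto simp: algebra_simps\<close>)
  then show ?thesis using zin by auto
qed

lemma lin_prod_degree:
  fixes S :: "real set"
  assumes "finite S"
  shows "degree (\<Prod>s\<in>S. [:-s, 1:]) = card S"
proof -
  have "degree (\<Prod>s\<in>S. [:-s, 1::real:]) = (\<Sum>s\<in>S. degree [:-s, 1::real:])"
    by (rule degree_prod_eq_sum_degree) auto
  then show ?thesis by simp
qed

lemma lin_prod_eval:
  fixes S :: "real set"
  assumes "finite S"
  shows "poly (\<Prod>s\<in>S. [:-s, 1:]) t = 0 \<longleftrightarrow> t \<in> S"
  using assms by (simp add: poly_prod prod_zero_iff)

lemma tri_avoid:
  fixes That :: "real set set" and V Ah :: "real set"
  assumes tri: "is_triangulation TYPE('n::finite) V That" and S0: "S0 \<in> That" and AS: "Ah \<subseteq> S0"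
    and ne: "Ah \<noteq> {}"
    and nf: "\<not> (\<exists>F. F facet_of cyclic_polytope TYPE('n) V \<and> (moment_pt ` Ah :: (real^'n) set) \<subseteq> F)"
    and w: "w \<in> V" "w \<notin> Ah"
  shows "\<exists>S\<in>That. Ah \<subseteq> S \<and> w \<notin> S"
proof -
  let ?N = "TYPE('n)"
  let ?m = "moment_pt :: real \<Rightarrow> real^'n"
  let ?P = "cyclic_polytope ?N V"
  have finV: "finite V" and TV: "\<forall>S\<in>That. S \<subseteq> V \<and> card S = CARD('n) + 1"
    and cover: "(\<Union>S\<in>That. gsimplex ?N S) = ?P"
    and inter: "\<forall>S\<in>That. \<forall>S'\<in>That. gsimplex ?N S \<inter> gsimplex ?N S' = gsimplex ?N (S \<inter> S')"
    using tri unfolding is_triangulation_def by auto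
  have finT: "finite That" using TV finV by (meson PowI finite_Pow_iff finite_subset subsetI)
  have finS: "finite S" if "S \<in> That" for S using TV that finV finite_subset by blast
  have finAh: "finite Ah" using AS finS[OF S0] finite_subset by blast
  have AhV: "Ah \<subseteq> V" using AS TV S0 by auto
  define c where "c = real (card Ah)"
  have cpos: "c > 0" using finAh ne by (simp add: c_def card_gt_0_iff)
  define p where "p = (1 / c) *\<^sub>R (\<Sum>t\<in>Ah. ?m t)"
  have p_sum: "p = (\<Sum>t\<in>Ah. (1 / c) *\<^sub>R ?m t)" by (simp add: p_def scaleR_sum_right)
  have pAh: "p \<in> convex hull (?m ` Ah)"
    unfolding p_sum
    by (rule convex_sum) (use finAh cpos in \<open>auto simp: c_def hull_inc\<close>)
  have mP: "?m t \<in> ?P" if "t \<in> V" for t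
    unfolding cyclic_polytope_def using that by (simp add: hull_inc)
  have pP: "p \<in> ?P" using pAh AhV unfolding cyclic_polytope_def by (meson hull_mono image_mono subsetD)
  have polyP: "polyhedron ?P" unfolding cyclic_polytope_def using finV by (simp add: polyhedron_convex_hull)
  have pF: "p \<notin> \<Union>{F. F facet_of ?P}"
  proof
    assume "p \<in> \<Union>{F. F facet_of ?P}"
    then obtain F where F: "F facet_of ?P" "p \<in> F" by blast
    obtain a b where ab: "a \<noteq> 0" "?P \<subseteq> {x. a \<bullet> x \<le> b}" "F = ?P \<inter> {x. a \<bullet> x = b}"
      using facet_of_polyhedron[OF polyP F(1)] by blast
    have le: "a \<bullet> ?m t \<le> b" if "t \<in> V" for t using ab(2) mP[OF that] by auto
    have "a \<bullet> p = b" using F(2) ab(3) by auto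
    moreover have "a \<bullet> p = (\<Sum>t\<in>Ah. a \<bullet> ?m t) / c"
      by (simp add: p_def inner_sum_right)
    ultimately have "(\<Sum>t\<in>Ah. a \<bullet> ?m t) = c * b" using cpos by (simp add: field_simps)
    then have "(\<Sum>t\<in>Ah. b - a \<bullet> ?m t) = 0" by (simp add: sum_subtractf c_def)
    moreover have "\<forall>t\<in>Ah. 0 \<le> b - a \<bullet> ?m t" using le AhV by auto
    ultimately have "\<forall>t\<in>Ah. b - a \<bullet> ?m t = 0" using sum_nonneg_eq_0_iff[OF finAh, of "\<lambda>t. b - a \<bullet> ?m t"] by simp
    then have "?m ` Ah \<subseteq> F" using ab(3) mP AhV by auto
    then show False using nf F(1) by blast
  qed
  have "p \<in> rel_interior ?P" using rel_interior_of_polyhedron[OF polyP] pP pF by blast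
  then obtain e1 where e1: "e1 > 0" "ball p e1 \<inter> affine hull ?P \<subseteq> ?P"
    by (auto simp: mem_rel_interior_ball)
  define K where "K = \<Union>(gsimplex ?N ` {S\<in>That. p \<notin> gsimplex ?N S})"
  have "closed K" unfolding K_def
  proof (rule closed_Union)
    show "finite (gsimplex ?N ` {S \<in> That. p \<notin> gsimplex ?N S})" using finT by simp
    show "\<forall>T\<in>gsimplex ?N ` {S \<in> That. p \<notin> gsimplex ?N S}. closed T"
    proof
      fix T assume "T \<in> gsimplex ?N ` {S \<in> That. p \<notin> gsimplex ?N S}"
      then obtain S where "S \<in> That" "T = convex hull (?m ` S)" by (auto simp: gsimplex_def)
      then show "closed T"
        using compact_imp_closed[OF compact_convex_hull[OF finite_imp_compact[OF finite_imageI[OF finS]]]] by blast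
    qed
  qed
  moreover have "p \<notin> K" by (auto simp: K_def)
  ultimately obtain e2 where e2: "e2 > 0" "ball p e2 \<subseteq> - K"
    using open_contains_ball[of "- K"] by (auto simp: open_Compl)
  define d where "d = ?m w"
  define r where "r = min e1 e2"
  define \<epsilon> where "\<epsilon> = r / (2 * (norm (p - d) + 1))"
  have rpos: "r > 0" using e1 e2 by (simp add: r_def)
  have den: "0 < 2 * (norm (p - d) + 1)" by (simp add: add_nonneg_pos)
  have epos: "\<epsilon> > 0" using rpos den unfolding \<epsilon>_def by (rule divide_pos_pos)
  define p' where "p' = p + \<epsilon> *\<^sub>R (p - d)"
  have "dist p p' = \<epsilon> * norm (p - d)" using epos by (simp add: p'_def dist_norm abs_of_pos)
  also have "\<dots> \<le> \<epsilon> * (norm (p - d) + 1)" using epos by simp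
  also have "\<dots> = r / 2" unfolding \<epsilon>_def using den by (simp add: field_simps)
  also have "\<dots> < r" using rpos by simp
  finally have dpp: "dist p p' < r" .
  have dP: "d \<in> ?P" using mP[OF w(1)] by (simp add: d_def)
  have "p' = (1 + \<epsilon>) *\<^sub>R p + (- \<epsilon>) *\<^sub>R d" by (simp add: p'_def algebra_simps)
  moreover have "p \<in> affine hull ?P" using pP by (rule hull_inc)
  moreover have "d \<in> affine hull ?P" using dP by (rule hull_inc)
  ultimately have "p' \<in> affine hull ?P"
    using mem_affine[OF affine_affine_hull, of p ?P d "1 + \<epsilon>" "- \<epsilon>"] by simp
  moreover have "p' \<in> ball p e1" using dpp by (simp add: r_def)
  ultimately have p'P: "p' \<in> ?P" using e1(2) by blast
  then have "p' \<in> (\<Union>S\<in>That. gsimplex ?N S)" using cover by simp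
  then obtain S where S: "S \<in> That" "p' \<in> gsimplex ?N S" by blast
  have "p' \<in> ball p e2" using dpp by (simp add: r_def)
  then have "p' \<notin> K" using e2(2) by blast
  then have pS: "p \<in> gsimplex ?N S" using S unfolding K_def by blast
  have cardS: "card S = CARD('n) + 1" and SV: "S \<subseteq> V" using TV S(1) by auto
  have cardS0: "card S0 = CARD('n) + 1" using TV S0 by auto
  have AhS: "Ah \<subseteq> S"
  proof
    fix a assume aAh: "a \<in> Ah"
    show "a \<in> S"
    proof (rule ccontr)
      assume aS: "a \<notin> S"
      define f where "f = (\<Prod>s\<in>S0-{a}. [:-s, 1:])"
      have aS0: "a \<in> S0" using aAh AS by auto
      have finS0: "finite S0" using finS[OF S0] .
      have degf: "degree f \<le> CARD('n)"
        using lin_prod_degree[of "S0 - {a}"] finS0 cardS0 aS0 by (simp add: f_def)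
      have "p \<in> gsimplex ?N (S \<inter> S0)" using inter S(1) S0 pS pAh AS
        by (metis IntI gsimplex_def hull_mono image_mono subsetD)
      then have "coeff f 0 + (vf f :: real^'n) \<bullet> p = 0"
        by (intro functional_hull_eq[OF degf]) (use aS finS0 in \<open>auto simp: gsimplex_def f_def lin_prod_eval\<close>)
      moreover have "coeff f 0 + (vf f :: real^'n) \<bullet> p = (\<Sum>t\<in>Ah. poly f t) / c"
        using avg_functional[OF finAh ne degf] by (simp add: p_def c_def)
      moreover have "(\<Sum>t\<in>Ah. poly f t) = poly f a"
      proof -
        have "(\<Sum>t\<in>Ah. poly f t) = poly f a + (\<Sum>t\<in>Ah-{a}. poly f t)"
          using finAh aAh by (simp add: sum.remove)
        moreover have "(\<Sum>t\<in>Ah-{a}. poly f t) = 0"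
          by (rule sum.neutral) (use AS finS0 in \<open>auto simp: f_def lin_prod_eval\<close>)
        ultimately show ?thesis by simp
      qed
      moreover have "poly f a \<noteq> 0" using finS0 by (simp add: f_def lin_prod_eval)
      ultimately show False using cpos by simp
    qed
  qed
  have "w \<notin> S"
  proof
    assume wS: "w \<in> S"
    have finS': "finite S" using finS[OF S(1)] .
    define f where "f = (\<Prod>s\<in>S-{w}. [:-s, 1:])"
    define g where "g = smult (poly f w) f"
    have degf: "degree f \<le> CARD('n)"
      using lin_prod_degree[of "S - {w}"] finS' cardS wS by (simp add: f_def)
    have degg: "degree g \<le> CARD('n)" using degf by (simp add: g_def)
    have fw: "poly f w \<noteq> 0" using finS' by (simp add: f_def lin_prod_eval)
    have gS: "\<forall>t\<in>S. 0 \<le> poly g t"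
    proof
      fix t assume "t \<in> S"
      show "0 \<le> poly g t"
      proof (cases "t = w")
        case True then show ?thesis by (simp add: g_def)
      next
        case False then have "poly f t = 0" using \<open>t \<in> S\<close> finS' by (simp add: f_def lin_prod_eval)
        then show ?thesis by (simp add: g_def)
      qed
    qed
    have ge: "0 \<le> coeff g 0 + (vf g :: real^'n) \<bullet> p'"
      using functional_hull_ge[OF degg gS] S(2) by (simp add: gsimplex_def)
    have Lp: "coeff g 0 + (vf g :: real^'n) \<bullet> p = 0"
    proof -
      have "coeff g 0 + (vf g :: real^'n) \<bullet> p = (\<Sum>t\<in>Ah. poly g t) / c"
        using avg_functional[OF finAh ne degg] by (simp add: p_def c_def)
      moreover have "(\<Sum>t\<in>Ah. poly g t) = 0"
        by (rule sum.neutral) (use w(2) finS' AhS in \<open>auto simp: g_def f_def lin_prod_eval\<close>)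
      ultimately show ?thesis by simp
    qed
    have Ld: "coeff g 0 + (vf g :: real^'n) \<bullet> d = poly g w"
      using vf_moment[OF degg, of w] by (simp add: d_def)
    have "coeff g 0 + (vf g :: real^'n) \<bullet> p' =
          (coeff g 0 + (vf g :: real^'n) \<bullet> p) + \<epsilon> * ((coeff g 0 + (vf g :: real^'n) \<bullet> p) - (coeff g 0 + (vf g :: real^'n) \<bullet> d))"
      by (simp add: p'_def inner_add_right inner_diff_right algebra_simps)
    also have "\<dots> = - \<epsilon> * poly g w" using Lp Ld by simp
    finally have "coeff g 0 + (vf g :: real^'n) \<bullet> p' = - \<epsilon> * (poly f w)^2"
      by (simp add: g_def power2_eq_square)
    moreover have "0 < \<epsilon> * (poly f w)^2" using epos fw by simp
    ultimately show False using ge by simp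
  qed
  then show ?thesis using S(1) AhS by blast
qed

context
  fixes m v :: nat and x y :: real
  assumes v2: "2 \<le> v" and vm: "v \<le> m - 1" and xl: "real v - 1 < x" and xy: "x < y"
    and yu: "y < real v + 1"
begin

lemma m3: "3 \<le> m" using v2 vm by linarith

lemma int_xy: "real j = x \<or> real j = y \<Longrightarrow> j = v"
proof -
  assume h: "real j = x \<or> real j = y"
  then have "real v - 1 < real j" "real j < real v + 1" using xl xy yu by auto
  then have "v < j + 1" "j < v + 1" by linarith+
  then show "j = v" by linarith
qed

lemma Vh_cases:
  assumes "t \<in> cyc_m_plus m v x y"
  shows "t = x \<or> t = y \<or> (\<exists>j\<in>{1..m}. j \<noteq> v \<and> t = real j)"
  using assms by (auto simp: cyc_m_plus_def)

lemma xy_gt1: "1 < x" "1 < y" "x < real m" "y < real m"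
proof -
  have "real v \<ge> 2" using v2 by simp
  then show a: "1 < x" using xl by linarith
  have "v + 1 \<le> m" using vm m3 by linarith
  then have "real v + 1 \<le> real m" by linarith
  then show b: "y < real m" using yu by linarith
  show "1 < y" using a xy by simp
  show "x < real m" using b xy by simp
qed

lemma Vh_bounds:
  assumes "t \<in> cyc_m_plus m v x y"
  shows "1 \<le> t" "t \<le> real m"
  using Vh_cases[OF assms] xy_gt1 by auto

lemma fin_Vh: "finite (cyc_m_plus m v x y)" by (simp add: cyc_m_plus_def)
lemma fin_V: "finite (cyc_m m)" by (simp add: cyc_m_def)

lemma one_in_Vh: "1 \<in> cyc_m_plus m v x y"
proof -
  have "1 \<in> {1..m} - {v}" using v2 m3 by auto
  then show ?thesis unfolding cyc_m_plus_def by (metis UnI1 image_eqI of_nat_1)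
qed

lemma m_in_Vh: "real m \<in> cyc_m_plus m v x y"
proof -
  have "m \<in> {1..m} - {v}" using vm m3 by auto
  then show ?thesis unfolding cyc_m_plus_def by blast
qed

lemma Max_Vh: "Max (cyc_m_plus m v x y) = real m"
  by (rule Max_eqI) (use fin_Vh m_in_Vh Vh_bounds in auto)
lemma Min_Vh: "Min (cyc_m_plus m v x y) = 1"
  by (rule Min_eqI) (use fin_Vh one_in_Vh Vh_bounds in auto)
lemma Max_V: "Max (cyc_m m) = real m"
  by (rule Max_eqI) (use m3 in \<open>auto simp: cyc_m_def\<close>)
lemma Min_V: "Min (cyc_m m) = 1"
  by (rule Min_eqI) (use m3 in \<open>auto simp: cyc_m_def image_iff intro: bexI[of _ 1]\<close>)

lemma v_in_Vh: "real v \<in> cyc_m_plus m v x y \<Longrightarrow> real v = x \<or> real v = y"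
  by (auto simp: cyc_m_plus_def)

lemma rest_int: "t \<in> cyc_m_plus m v x y \<Longrightarrow> t \<notin> {x, y} \<Longrightarrow> \<exists>j\<in>{1..m}. j \<noteq> v \<and> t = real j"
  using Vh_cases by blast

lemma col_sub: "S \<subseteq> cyc_m_plus m v x y \<Longrightarrow> collapse x y v S \<subseteq> real ` {1..m}"
proof -
  assume S: "S \<subseteq> cyc_m_plus m v x y"
  have "v \<in> {1..m}" using v2 vm by auto
  moreover have "S - {x, y} \<subseteq> real ` {1..m}" using S by (auto simp: cyc_m_plus_def)
  ultimately show ?thesis using S by (auto simp: collapse_def)
qed

lemma col_mono: "A \<subseteq> S \<Longrightarrow> collapse x y v A \<subseteq> collapse x y v S"
  by (auto simp: collapse_def)

lemma col_sub2: "collapse x y v A \<subseteq> A \<union> {real v}"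
  by (auto simp: collapse_def)

lemma col_card:
  assumes S: "S \<subseteq> cyc_m_plus m v x y" and fin: "finite S" and nxy: "\<not> {x, y} \<subseteq> S"
  shows "card (collapse x y v S) = card S"
proof (cases "S \<inter> {x, y} = {}")
  case True then show ?thesis by (simp add: collapse_def)
next
  case False
  then obtain z where z: "z \<in> S" "z \<in> {x, y}" by blast
  have eq: "S - {x, y} = S - {z}" using z nxy by auto
  have vn: "real v \<notin> S - {x, y}" using S v_in_Vh by auto
  have "collapse x y v S = insert (real v) (S - {z})"
    unfolding collapse_def using z eq by auto
  then have "card (collapse x y v S) = card (insert (real v) (S - {z}))" by simp
  also have "\<dots> = card (S - {z}) + 1" using vn eq fin by simp
  also have "\<dots> = card S"
  proof -
    have "card S > 0" using z fin card_gt_0_iff by blast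
    then show ?thesis using z fin by (simp add: card_Diff_singleton)
  qed
  finally show ?thesis .
qed

lemma sep_hat:
  fixes B :: "nat set" and Ah :: "real set"
  assumes BM: "B \<subseteq> {1..m}" and sepB: "\<forall>a\<in>B. \<forall>b\<in>B. a < b \<longrightarrow> a + 2 \<le> b"
    and AhV: "Ah \<subseteq> cyc_m_plus m v x y" and rest: "\<forall>a\<in>Ah - {x, y}. a \<in> real ` B"
    and one: "\<not> {x, y} \<subseteq> Ah" and vB: "Ah \<inter> {x, y} \<noteq> {} \<longrightarrow> v \<in> B"
  shows "sep (cyc_m_plus m v x y) Ah"
  unfolding sep_def
proof (intro ballI impI)
  fix a b assume a: "a \<in> Ah" and b: "b \<in> Ah" and ab: "a < b"
  let ?Vh = "cyc_m_plus m v x y"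
  have inVh: "real j \<in> ?Vh" if "j \<in> {1..m}" "j \<noteq> v" for j
    using that unfolding cyc_m_plus_def by blast
  have xVh: "x \<in> ?Vh" by (simp add: cyc_m_plus_def)
  show "\<exists>s\<in>?Vh. a < s \<and> s < b"
  proof (cases "a \<in> {x, y}")
    case ax: True
    show ?thesis
    proof (cases "b \<in> {x, y}")
      case True
      then show ?thesis using ax one a b ab by auto
    next
      case bn: False
      obtain jb where jb: "jb \<in> B" "b = real jb" using rest b bn by auto
      have vB': "v \<in> B" using vB a ax by auto
      have "jb \<noteq> v" using jb bn AhV b v_in_Vh by auto
      moreover have "\<not> jb < v"
      proof
        assume "jb < v"
        then have "jb + 2 \<le> v" using sepB jb(1) vB' by auto
        then have "real jb + 2 \<le> real v" by linarith
        then show False using ab ax jb(2) xl xy by auto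
      qed
      ultimately have "v < jb" by simp
      then have jb2: "v + 2 \<le> jb" using sepB jb(1) vB' by auto
      have "v + 1 \<in> {1..m}" using jb2 jb(1) BM by auto
      then have "real (v + 1) \<in> ?Vh" by (intro inVh) auto
      moreover have "a < real (v + 1)" using ax xy yu by auto
      moreover have "real (v + 1) < b" using jb2 jb(2) by simp
      ultimately show ?thesis by blast
    qed
  next
    case an: False
    obtain ja where ja: "ja \<in> B" "a = real ja" using rest a an by auto
    show ?thesis
    proof (cases "b \<in> {x, y}")
      case bx: True
      have vB': "v \<in> B" using vB b bx by auto
      have "ja \<noteq> v" using ja an AhV a v_in_Vh by auto
      moreover have "\<not> v < ja"
      proof
        assume "v < ja"
        then have "v + 2 \<le> ja" using sepB ja(1) vB' by auto
        then have "real v + 2 \<le> real ja" by linarith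
        then show False using ab bx ja(2) yu xy by auto
      qed
      ultimately have "ja < v" by simp
      then have ja2: "ja + 2 \<le> v" using sepB ja(1) vB' by auto
      have "v - 1 \<in> {1..m}" using ja2 ja(1) BM vm by auto
      moreover have "v - 1 \<noteq> v" using v2 by simp
      ultimately have "real (v - 1) \<in> ?Vh" by (intro inVh) auto
      moreover have "real (v - 1) < b" using bx xl xy v2 by (auto simp: of_nat_diff)
      moreover have "a < real (v - 1)" using ja2 ja(2) v2 by (simp add: of_nat_diff)
      ultimately show ?thesis by blast
    next
      case bn: False
      obtain jb where jb: "jb \<in> B" "b = real jb" using rest b bn by auto
      have "ja < jb" using ab ja jb by simp
      then have j2: "ja + 2 \<le> jb" using sepB ja jb by auto
      show ?thesis
      proof (cases "ja + 1 = v")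
        case True
        have "a < x" using True ja(2) xl by (simp add: algebra_simps)
        moreover have "x < b"
        proof -
          have "real v + 1 \<le> real jb" using True j2 by linarith
          then show ?thesis using jb(2) xy yu by simp
        qed
        ultimately show ?thesis using xVh by blast
      next
        case False
        have "ja + 1 \<in> {1..m}" using j2 jb(1) BM by auto
        then have "real (ja + 1) \<in> ?Vh" using False by (intro inVh) auto
        moreover have "a < real (ja + 1)" "real (ja + 1) < b" using ja(2) jb(2) j2 by auto
        ultimately show ?thesis by blast
      qed
    qed
  qed
qed

end

lemma card_ge2: "finite A \<Longrightarrow> a \<in> A \<Longrightarrow> b \<in> A \<Longrightarrow> a \<noteq> b \<Longrightarrow> 2 \<le> card A"
proof -
  assume h: "finite A" "a \<in> A" "b \<in> A" "a \<noteq> b"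
  then have "card {a, b} \<le> card A" by (intro card_mono) auto
  then show ?thesis using h(4) by simp
qed

lemma poly_lin2: "poly ([:-a, 1:] * [:-b, 1:]) (t::real) = (t - a) * (t - b)"
  by (simp add: algebra_simps)

lemma poly_lin2': "poly ([:-a, 1:] * [:b, -1:]) (t::real) = (t - a) * (b - t)"
  by (simp add: algebra_simps)

lemma cov_pair:
  fixes A V :: "real set"
  assumes fin: "finite A" and a: "a \<in> A" and b: "b \<in> A" and ab: "a < b"
    and gap: "\<forall>t\<in>V. t \<le> a \<or> b \<le> t" and cd: "2 * card A \<le> n + 2"
  shows "polycov n V A"
proof (rule cover_construct[OF fin, of "{a, b}" "[:-a, 1:] * [:-b, 1:]"])
  show "{a, b} \<subseteq> A" using a b by auto
  have d: "degree ([:-a, 1:] * [:-b, 1::real:]) = 2" by (simp add: degree_mult_eq)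
  then show "1 \<le> degree ([:-a, 1:] * [:-b, 1::real:])" by simp
  show "\<forall>t\<in>V. 0 \<le> poly ([:-a, 1:] * [:-b, 1:]) t"
  proof
    fix t assume "t \<in> V"
    then have "t \<le> a \<or> b \<le> t" using gap by auto
    then show "0 \<le> poly ([:-a, 1:] * [:-b, 1:]) t"
    proof
      assume "t \<le> a"
      then have "t - a \<le> 0" "t - b \<le> 0" using ab by auto
      then show ?thesis unfolding poly_lin2 by (simp add: mult_nonpos_nonpos)
    next
      assume "b \<le> t"
      then have "t - a \<ge> 0" "t - b \<ge> 0" using ab by auto
      then show ?thesis unfolding poly_lin2 by (simp add: mult_nonneg_nonneg)
    qed
  qed
  show "\<forall>t\<in>{a, b}. poly ([:-a, 1:] * [:-b, 1:]) t = 0" by auto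
  have "card (A - {a, b}) = card A - 2" using a b ab fin by (simp add: card_Diff_subset)
  moreover have "2 \<le> card A" using card_ge2[OF fin a b] ab by simp
  ultimately show "2 * card (A - {a, b}) + degree ([:-a, 1:] * [:-b, 1::real:]) \<le> n"
    using d cd by simp
qed

lemma cov_ends:
  fixes A V :: "real set"
  assumes fin: "finite A" and a: "lo \<in> A" and b: "hi \<in> A" and ab: "lo < hi"
    and bd: "\<forall>t\<in>V. lo \<le> t \<and> t \<le> hi" and cd: "2 * card A \<le> n + 2"
  shows "polycov n V A"
proof (rule cover_construct[OF fin, of "{lo, hi}" "[:-lo, 1:] * [:hi, -1:]"])
  show "{lo, hi} \<subseteq> A" using a b by auto
  have d: "degree ([:-lo, 1:] * [:hi, -1::real:]) = 2" by (simp add: degree_mult_eq)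
  then show "1 \<le> degree ([:-lo, 1:] * [:hi, -1::real:])" by simp
  show "\<forall>t\<in>V. 0 \<le> poly ([:-lo, 1:] * [:hi, -1:]) t"
  proof
    fix t assume "t \<in> V"
    then have "t - lo \<ge> 0" "hi - t \<ge> 0" using bd by auto
    then show "0 \<le> poly ([:-lo, 1:] * [:hi, -1:]) t" unfolding poly_lin2' by (simp add: mult_nonneg_nonneg)
  qed
  show "\<forall>t\<in>{lo, hi}. poly ([:-lo, 1:] * [:hi, -1:]) t = 0" by auto
  have "card (A - {lo, hi}) = card A - 2" using a b ab fin by (simp add: card_Diff_subset)
  moreover have "2 \<le> card A" using card_ge2[OF fin a b] ab by simp
  ultimately show "2 * card (A - {lo, hi}) + degree ([:-lo, 1:] * [:hi, -1::real:]) \<le> n"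
    using d cd by simp
qed

lemma cov_lo:
  fixes A V :: "real set"
  assumes fin: "finite A" and a: "lo \<in> A" and bd: "\<forall>t\<in>V. lo \<le> t" and cd: "2 * card A \<le> n + 1"
  shows "polycov n V A"
proof (rule cover_construct[OF fin, of "{lo}" "[:-lo, 1:]"])
  show "{lo} \<subseteq> A" using a by auto
  show "1 \<le> degree [:-lo, 1::real:]" by simp
  show "\<forall>t\<in>V. 0 \<le> poly [:-lo, 1:] t" using bd by auto
  show "\<forall>t\<in>{lo}. poly [:-lo, 1:] t = 0" by auto
  have "card (A - {lo}) = card A - 1" using a fin by simp
  moreover have "1 \<le> card A" using a fin by (simp add: Suc_le_eq card_gt_0_iff) blast
  ultimately show "2 * card (A - {lo}) + degree [:-lo, 1::real:] \<le> n" using cd by simp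
qed

lemma cov_hi:
  fixes A V :: "real set"
  assumes fin: "finite A" and a: "hi \<in> A" and bd: "\<forall>t\<in>V. t \<le> hi" and cd: "2 * card A \<le> n + 1"
  shows "polycov n V A"
proof (rule cover_construct[OF fin, of "{hi}" "[:hi, -1:]"])
  show "{hi} \<subseteq> A" using a by auto
  show "1 \<le> degree [:hi, -1::real:]" by simp
  show "\<forall>t\<in>V. 0 \<le> poly [:hi, -1:] t" using bd by auto
  show "\<forall>t\<in>{hi}. poly [:hi, -1:] t = 0" by auto
  have "card (A - {hi}) = card A - 1" using a fin by simp
  moreover have "1 \<le> card A" using a fin by (simp add: Suc_le_eq card_gt_0_iff) blast
  ultimately show "2 * card (A - {hi}) + degree [:hi, -1::real:] \<le> n" using cd by simp
qed

lemma col_dis: "S \<inter> {x, y} = {} \<Longrightarrow> collapse x y v S = S"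
  unfolding collapse_def by simp

lemma col_ndis: "S \<inter> {x, y} \<noteq> {} \<Longrightarrow> collapse x y v S = S - {x, y} \<union> {real v}"
  unfolding collapse_def by (simp only: if_False)

theorem lemma4p25:
  fixes m v :: nat and x y :: real and That :: "real set set"
  assumes "2 \<le> v" and "v \<le> m - 1"
    and "real v - 1 < x" and "x < y" and "y < real v + 1"
    and "is_triangulation TYPE('n::finite) (cyc_m_plus m v x y) That"
  shows "simp_set TYPE('n) (cyc_m m) (collapse_tri x y v m CARD('n) That) =
         {A. A \<in> (\<lambda>B. real ` B) ` nu m (CARD('n) div 2) \<and>
             (\<exists>Ahat \<in> simp_set TYPE('n) (cyc_m_plus m v x y) That. A = collapse x y v Ahat)}"
proof -
  let ?N = "TYPE('n)"
  let ?V = "cyc_m m"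
  let ?Vh = "cyc_m_plus m v x y"
  let ?col = "collapse x y v"
  define n where "n = CARD('n)"
  define k where "k = n div 2"
  have nk: "n = 2 * k \<or> n = 2 * k + 1" unfolding k_def by arith
  note ctx = assms(1-5)
  note m3 = m3[OF ctx] and int_xy = int_xy[OF ctx] and Vh_cases = Vh_cases[OF ctx]
    and Vh_bounds = Vh_bounds[OF ctx] and xy_gt1 = xy_gt1[OF ctx] and fin_Vh = fin_Vh[OF ctx]
    and fin_V = fin_V[OF ctx] and Max_Vh = Max_Vh[OF ctx] and Min_Vh = Min_Vh[OF ctx]
    and Max_V = Max_V[OF ctx] and Min_V = Min_V[OF ctx] and v_in_Vh = v_in_Vh[OF ctx]
    and col_sub = col_sub[OF ctx] and col_mono = col_mono[OF ctx] and col_sub2 = col_sub2[OF ctx]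
    and col_card = col_card[OF ctx] and sep_hat = sep_hat[OF ctx]
  have tri: "finite ?Vh" "\<forall>S\<in>That. S \<subseteq> ?Vh \<and> card S = n + 1"
    using assms(6) unfolding is_triangulation_def n_def by auto
  have cardV: "card ?V = m" by (simp add: cyc_m_def card_image)
  have V_int: "\<exists>j\<in>{1..m}. t = real j" if "t \<in> ?V" for t using that by (auto simp: cyc_m_def)
  have Vb: "\<forall>t\<in>?V. 1 \<le> t \<and> t \<le> real m" by (auto simp: cyc_m_def)
  have Vhb: "\<forall>t\<in>?Vh. 1 \<le> t \<and> t \<le> real m" using Vh_bounds by auto
  have vne1: "real v \<noteq> 1" using assms(1) by simp
  have vnem: "real v \<noteq> real m" using assms(2) m3 by simp
  show ?thesis
  proof (rule set_eqI, rule iffI)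
    fix A assume "A \<in> simp_set ?N ?V (collapse_tri x y v m CARD('n) That)"
    then obtain Sh where cA: "card A = k + 1" and Sh: "Sh \<in> That" and AS: "A \<subseteq> ?col Sh"
      and Ssub: "?col Sh \<subseteq> real ` {1..m}" and cS: "card (?col Sh) = n + 1"
      and nf: "\<not> (\<exists>F. F facet_of cyclic_polytope ?N ?V \<and> (moment_pt ` A :: (real^'n) set) \<subseteq> F)"
      by (auto simp: simp_set_def collapse_tri_def n_def k_def)
    have AV: "A \<subseteq> ?V" using AS Ssub by (auto simp: cyc_m_def)
    have finA: "finite A" using AV fin_V finite_subset by blast
    have cV: "n + 1 \<le> card ?V"
      using cS card_mono[OF fin_V, of "?col Sh"] Ssub by (simp add: cyc_m_def)
    have ne: "A \<noteq> {}" using cA by auto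
    have npc: "\<not> polycov n ?V A" using facet_iff[where 'n='n, OF fin_V _ AV ne] cV nf by (simp add: n_def)
    have cA2: "2 * card A \<le> n + 2" using cA nk by auto
    define B where "B = {j\<in>{1..m}. real j \<in> A}"
    have AB: "A = real ` B" using AV by (auto simp: B_def cyc_m_def)
    have cB: "card B = k + 1" using cA AB by (simp add: card_image)
    have BM: "B \<subseteq> {1..m}" by (auto simp: B_def)
    have sepB: "\<forall>a\<in>B. \<forall>b\<in>B. a < b \<longrightarrow> a + 2 \<le> b"
    proof (intro ballI impI)
      fix a b assume ab: "a \<in> B" "b \<in> B" "a < b"
      show "a + 2 \<le> b"
      proof (rule ccontr)
        assume "\<not> a + 2 \<le> b"
        then have b1: "b = a + 1" using ab by simp
        have "polycov n ?V A"
        proof (rule cov_pair[OF finA _ _ _ _ cA2, of "real a" "real b"])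
          show "real a \<in> A" "real b \<in> A" using ab AB by auto
          show "real a < real b" using ab by simp
          show "\<forall>t\<in>?V. t \<le> real a \<or> real b \<le> t"
          proof
            fix t assume "t \<in> ?V"
            then obtain j where "t = real j" using V_int by blast
            then show "t \<le> real a \<or> real b \<le> t" using b1 by auto
          qed
        qed
        then show False using npc by simp
      qed
    qed
    have endB: "\<forall>a\<in>B. \<forall>b\<in>B. b \<le> a + m - 2"
    proof (intro ballI)
      fix a b assume ab: "a \<in> B" "b \<in> B"
      show "b \<le> a + m - 2"
      proof (rule ccontr)
        assume "\<not> b \<le> a + m - 2"
        moreover have "1 \<le> a" "b \<le> m" using ab BM by auto
        ultimately have a1: "a = 1" and bm: "b = m" using m3 by auto
        have "polycov n ?V A"
        proof (rule cov_ends[OF finA _ _ _ _ cA2, of 1 "real m"])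
          show "1 \<in> A" "real m \<in> A" using ab AB a1 bm by force+
          show "1 < real m" using m3 by simp
          show "\<forall>t\<in>?V. 1 \<le> t \<and> t \<le> real m" using Vb .
        qed
        then show False using npc by simp
      qed
    qed
    have nuB: "B \<in> nu m k"
      unfolding nu_def using BM cB sepB endB by auto
    have odd1: "1 \<notin> A" if "n = 2 * k + 1"
    proof
      assume "1 \<in> A"
      have "polycov n ?V A"
        by (rule cov_lo[OF finA \<open>1 \<in> A\<close>]) (use Vb cA that in auto)
      then show False using npc by simp
    qed
    have oddm: "real m \<notin> A" if "n = 2 * k + 1"
    proof
      assume "real m \<in> A"
      have "polycov n ?V A"
        by (rule cov_hi[OF finA \<open>real m \<in> A\<close>]) (use Vb cA that in auto)
      then show False using npc by simp
    qed
    have ShVh: "Sh \<subseteq> ?Vh" and cSh: "card Sh = n + 1" using tri Sh by auto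
    have finSh: "finite Sh" using ShVh fin_Vh finite_subset by blast
    have cVh: "n + 1 \<le> card ?Vh" using card_mono[OF fin_Vh ShVh] cSh by simp
    have A_int: "a \<notin> {x, y} \<or> a = real v" if aA: "a \<in> A" for a
    proof -
      obtain j where "j \<in> B" "a = real j" using aA AB by auto
      then show ?thesis using int_xy by auto
    qed
    obtain Ah where AhSh: "Ah \<subseteq> Sh" and colAh: "?col Ah = A" and cAh: "card Ah = k + 1"
      and rest: "\<forall>a\<in>Ah - {x, y}. a \<in> real ` B" and one: "\<not> {x, y} \<subseteq> Ah"
      and vB: "Ah \<inter> {x, y} \<noteq> {} \<longrightarrow> v \<in> B"
    proof (cases "real v \<in> A")
      case False
      have dis: "A \<inter> {x, y} = {}" using A_int False by blast
      have "A \<subseteq> Sh"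
      proof (cases "Sh \<inter> {x, y} = {}")
        case True then show ?thesis using AS by (simp add: col_dis)
      next
        case False
        then have "?col Sh = Sh - {x, y} \<union> {real v}" by (rule col_ndis)
        then show ?thesis using AS \<open>real v \<notin> A\<close> by auto
      qed
      moreover have "?col A = A" using dis by (rule col_dis)
      moreover have "\<forall>a\<in>A - {x, y}. a \<in> real ` B" using AB by auto
      moreover have "\<not> {x, y} \<subseteq> A" using dis by auto
      moreover have "A \<inter> {x, y} \<noteq> {} \<longrightarrow> v \<in> B" using dis by simp
      ultimately show ?thesis using that cA by blast
    next
      case True
      have "Sh \<inter> {x, y} \<noteq> {}"
      proof
        assume e: "Sh \<inter> {x, y} = {}"
        then have "?col Sh = Sh" by (rule col_dis)
        then have "real v \<in> Sh" using True AS by auto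
        then have "real v = x \<or> real v = y" using v_in_Vh ShVh by auto
        then show False using e \<open>real v \<in> Sh\<close> by auto
      qed
      then obtain z where z: "z \<in> Sh" "z \<in> {x, y}" by blast
      define Ah where "Ah = insert z (A - {real v})"
      have colSh: "?col Sh = Sh - {x, y} \<union> {real v}"
        using \<open>Sh \<inter> {x, y} \<noteq> {}\<close> by (rule col_ndis)
      have zA: "z \<notin> A - {real v}" using A_int z(2) by auto
      have disA: "(A - {real v}) \<inter> {x, y} = {}" using A_int by blast
      have "Ah \<subseteq> Sh" using AS colSh z(1) by (auto simp: Ah_def)
      moreover have "?col Ah = A"
      proof -
        have "Ah \<inter> {x, y} \<noteq> {}" using z by (auto simp: Ah_def)
        then have "?col Ah = Ah - {x, y} \<union> {real v}" by (rule col_ndis)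
        also have "Ah - {x, y} = A - {real v}" using z(2) disA by (auto simp: Ah_def)
        finally show ?thesis using True by auto
      qed
      moreover have "card Ah = k + 1"
      proof -
        have "card Ah = card (A - {real v}) + 1" using zA finA by (simp add: Ah_def)
        also have "\<dots> = k + 1" using True finA cA by (simp add: card_Diff_singleton)
        finally show ?thesis .
      qed
      moreover have "\<forall>a\<in>Ah - {x, y}. a \<in> real ` B" using AB z(2) by (auto simp: Ah_def)
      moreover have "\<not> {x, y} \<subseteq> Ah" using disA assms(4) z(2) by (auto simp: Ah_def)
      moreover have "v \<in> B" using True AB by auto
      ultimately show ?thesis using that by blast
    qed
    have AhVh: "Ah \<subseteq> ?Vh" using AhSh ShVh by auto
    have Ahne: "Ah \<noteq> {}" using cAh by auto
    have end1: "1 \<in> Ah \<Longrightarrow> 1 \<in> A" and endm: "real m \<in> Ah \<Longrightarrow> real m \<in> A"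
      using rest xy_gt1 AB by auto
    have spAh: "sep ?Vh Ah" by (rule sep_hat[OF BM sepB AhVh rest one vB])
    have "\<not> polycov n ?Vh Ah"
    proof (rule gale[OF fin_Vh AhVh Ahne spAh])
      show "(n + 2 \<le> 2 * card Ah \<and> (Max ?Vh \<notin> Ah \<or> Min ?Vh \<notin> Ah)) \<or>
            (n + 2 \<le> 2 * card Ah + 1 \<and> Max ?Vh \<notin> Ah \<and> Min ?Vh \<notin> Ah)"
        using nk
      proof
        assume ev: "n = 2 * k"
        have "\<not> (real m \<in> Ah \<and> 1 \<in> Ah)"
        proof
          assume "real m \<in> Ah \<and> 1 \<in> Ah"
          then have "m \<in> B" "1 \<in> B" using end1 endm AB by (auto simp: image_iff)
          then show False using endB m3 by fastforce
        qed
        then show ?thesis using ev cAh Max_Vh Min_Vh by auto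
      next
        assume od: "n = 2 * k + 1"
        then show ?thesis using cAh Max_Vh Min_Vh end1 endm odd1 oddm by auto
      qed
    qed
    then have nfh: "\<not> (\<exists>F. F facet_of cyclic_polytope ?N ?Vh \<and> (moment_pt ` Ah :: (real^'n) set) \<subseteq> F)"
      using facet_iff[where 'n='n, OF fin_Vh _ AhVh Ahne] cVh by (simp add: n_def)
    have "Ah \<in> simp_set ?N ?Vh That"
      unfolding simp_set_def using cAh Sh AhSh nfh by (auto simp: n_def k_def)
    then show "A \<in> {A. A \<in> (\<lambda>B. real ` B) ` nu m (CARD('n) div 2) \<and>
             (\<exists>Ahat \<in> simp_set ?N ?Vh That. A = ?col Ahat)}"
      using nuB AB colAh by (auto simp: n_def k_def)
  next
    fix A assume "A \<in> {A. A \<in> (\<lambda>B. real ` B) ` nu m (CARD('n) div 2) \<and>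
             (\<exists>Ahat \<in> simp_set ?N ?Vh That. A = ?col Ahat)}"
    then obtain B Ah where nuB: "B \<in> nu m k" and AB: "A = real ` B"
      and Ahs: "Ah \<in> simp_set ?N ?Vh That" and colAh: "A = ?col Ah"
      by (auto simp: n_def k_def)
    have BM: "B \<subseteq> {1..m}" and cB: "card B = k + 1"
      and sepB: "\<forall>a\<in>B. \<forall>b\<in>B. a < b \<longrightarrow> a + 2 \<le> b"
      and endB: "\<forall>a\<in>B. \<forall>b\<in>B. b \<le> a + m - 2"
      using nuB unfolding nu_def by auto
    obtain Sh0 where cAh: "card Ah = k + 1" and Sh0: "Sh0 \<in> That" and AhSh0: "Ah \<subseteq> Sh0"
      and nfh: "\<not> (\<exists>F. F facet_of cyclic_polytope ?N ?Vh \<and> (moment_pt ` Ah :: (real^'n) set) \<subseteq> F)"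
      using Ahs unfolding simp_set_def by (auto simp: n_def k_def)
    have Sh0Vh: "Sh0 \<subseteq> ?Vh" and cSh0: "card Sh0 = n + 1" using tri Sh0 by auto
    have cVh: "n + 1 \<le> card ?Vh" using card_mono[OF fin_Vh Sh0Vh] cSh0 by simp
    have AhVh: "Ah \<subseteq> ?Vh" using AhSh0 Sh0Vh by auto
    have finAh: "finite Ah" using AhVh fin_Vh finite_subset by blast
    have Ahne: "Ah \<noteq> {}" using cAh by auto
    have npch: "\<not> polycov n ?Vh Ah" using facet_iff[where 'n='n, OF fin_Vh _ AhVh Ahne] cVh nfh by (simp add: n_def)
    have cA2: "2 * card Ah \<le> n + 2" using cAh nk by auto
    have nxy: "\<not> {x, y} \<subseteq> Ah"
    proof
      assume "{x, y} \<subseteq> Ah"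
      have "polycov n ?Vh Ah"
      proof (rule cov_pair[OF finAh _ _ assms(4) _ cA2])
        show "x \<in> Ah" "y \<in> Ah" using \<open>{x, y} \<subseteq> Ah\<close> by auto
        show "\<forall>t\<in>?Vh. t \<le> x \<or> y \<le> t"
        proof
          fix t assume t: "t \<in> ?Vh"
          show "t \<le> x \<or> y \<le> t"
          proof (cases "t \<in> {x, y}")
            case True then show ?thesis using assms(4) by auto
          next
            case False
            then obtain j where j: "j \<noteq> v" "t = real j" using Vh_cases[OF t] by auto
            then consider "j + 1 \<le> v" | "v + 1 \<le> j" by linarith
            then show ?thesis
            proof cases
              case 1 then have "real j + 1 \<le> real v" by linarith
              then show ?thesis using j assms(3) by auto
            next
              case 2 then have "real v + 1 \<le> real j" by linarith
              then show ?thesis using j assms(5) by auto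
            qed
          qed
        qed
      qed
      then show False using npch by simp
    qed
    have odd1: "1 \<notin> Ah" if "n = 2 * k + 1"
    proof
      assume "1 \<in> Ah"
      have "polycov n ?Vh Ah"
        by (rule cov_lo[OF finAh \<open>1 \<in> Ah\<close>]) (use Vhb cAh that in auto)
      then show False using npch by simp
    qed
    have oddm: "real m \<notin> Ah" if "n = 2 * k + 1"
    proof
      assume "real m \<in> Ah"
      have "polycov n ?Vh Ah"
        by (rule cov_hi[OF finAh \<open>real m \<in> Ah\<close>]) (use Vhb cAh that in auto)
      then show False using npch by simp
    qed
    obtain w where w: "w \<in> {x, y}" "w \<notin> Ah" using nxy by blast
    have wVh: "w \<in> ?Vh" using w(1) by (auto simp: cyc_m_plus_def)
    obtain Sh where Sh: "Sh \<in> That" "Ah \<subseteq> Sh" "\<not> {x, y} \<subseteq> Sh"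
    proof (cases "{x, y} \<subseteq> Sh0")
      case False then show ?thesis using that Sh0 AhSh0 by blast
    next
      case True
      obtain S where "S \<in> That" "Ah \<subseteq> S" "w \<notin> S"
        using tri_avoid[OF assms(6) Sh0 AhSh0 Ahne nfh wVh w(2)] by blast
      then show ?thesis using that w(1) by blast
    qed
    have ShVh: "Sh \<subseteq> ?Vh" and cSh: "card Sh = n + 1" using tri Sh(1) by auto
    have finSh: "finite Sh" using ShVh fin_Vh finite_subset by blast
    define S where "S = ?col Sh"
    have SM: "S \<subseteq> real ` {1..m}" using col_sub[OF ShVh] by (simp add: S_def)
    have cS: "card S = n + 1" using col_card[OF ShVh finSh Sh(3)] cSh by (simp add: S_def)
    have ST: "S \<in> collapse_tri x y v m CARD('n) That"
      unfolding collapse_tri_def using Sh(1) SM cS by (auto simp: S_def n_def)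
    have AS: "A \<subseteq> S" using col_mono[OF Sh(2)] colAh by (simp add: S_def)
    have cA: "card A = k + 1" using AB cB by (simp add: card_image)
    have AV: "A \<subseteq> ?V" using AB BM by (auto simp: cyc_m_def)
    have ne: "A \<noteq> {}" using cA by auto
    have cV: "n + 1 \<le> card ?V" using cS card_mono[OF fin_V, of S] SM by (simp add: cyc_m_def)
    have spA: "sep ?V A"
      unfolding sep_def
    proof (intro ballI impI)
      fix a b assume ab: "a \<in> A" "b \<in> A" "a < b"
      obtain ja jb where j: "ja \<in> B" "jb \<in> B" "a = real ja" "b = real jb" using ab AB by auto
      then have "ja < jb" using ab by simp
      then have j2: "ja + 2 \<le> jb" using sepB j by auto
      have "ja + 1 \<in> {1..m}" using j2 j BM by auto
      then have "real (ja + 1) \<in> ?V" unfolding cyc_m_def by (rule imageI)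
      moreover have "a < real (ja + 1)" "real (ja + 1) < b" using j j2 by auto
      ultimately show "\<exists>s\<in>?V. a < s \<and> s < b" by blast
    qed
    have A1: "1 \<in> A \<Longrightarrow> 1 \<in> Ah" and Am: "real m \<in> A \<Longrightarrow> real m \<in> Ah"
      using col_sub2[of Ah] colAh vne1 vnem by auto
    have "\<not> polycov n ?V A"
    proof (rule gale[OF fin_V AV ne spA])
      show "(n + 2 \<le> 2 * card A \<and> (Max ?V \<notin> A \<or> Min ?V \<notin> A)) \<or>
            (n + 2 \<le> 2 * card A + 1 \<and> Max ?V \<notin> A \<and> Min ?V \<notin> A)"
        using nk
      proof
        assume ev: "n = 2 * k"
        have "\<not> (real m \<in> A \<and> 1 \<in> A)"
        proof
          assume "real m \<in> A \<and> 1 \<in> A"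
          then have "m \<in> B" "1 \<in> B" using AB by (auto simp: image_iff)
          then show False using endB m3 by fastforce
        qed
        then show ?thesis using ev cA Max_V Min_V by auto
      next
        assume od: "n = 2 * k + 1"
        then show ?thesis using cA Max_V Min_V A1 Am odd1 oddm by auto
      qed
    qed
    then have nf: "\<not> (\<exists>F. F facet_of cyclic_polytope ?N ?V \<and> (moment_pt ` A :: (real^'n) set) \<subseteq> F)"
      using facet_iff[where 'n='n, OF fin_V _ AV ne] cV by (simp add: n_def)
    show "A \<in> simp_set ?N ?V (collapse_tri x y v m CARD('n) That)"
      unfolding simp_set_def using cA ST AS nf by (auto simp: n_def k_def)
  qed
qed

end
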